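(* Consider the linear difference equation in an unknown sequence $\{x(n)\}_{n \in \mathbb{Z}}$ \[ a_r(n) x(n + r) + \ldots + a_1(n) x(n + 1) + a_0(n) x(n) = 0 \quad \text{for every } n \in \mathbb{Z}, \] where $\{a_0(n)\}_{n\in\mathbb{Z}}, \ldots, \{a_r(n)\}_{n\in\mathbb{Z}}$ are arbitrary numerical sequences. Assume that the space $W$ of solutions of this equation whose support $\operatorname{supp}(\{x(n)\}) = \{i \in \mathbb{Z} \mid x(i) \neq 0\}$ is contained in $\mathbb{Z}_{\geqslant 0}$ is infinite-dimensional. Then there exists an index $J > 0$ such that this equation has a nonzero solution with support contained in $\{1, 2, \ldots, J\}$.
   Context: Solutions are two-sided numerical sequences indexed by $\mathbb{Z}$; the coefficients are arbitrary sequences (no nonvanishing assumption on $a_0$ or $a_r$), and the number $r$ is the order of the equation. The solution set is a vector space. *)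

theory Defs
  imports Complex_Main "HOL-Library.Function_Algebras"
begin

definition seq_scale :: "complex \<Rightarrow> (int \<Rightarrow> complex) \<Rightarrow> (int \<Rightarrow> complex)" where
  "seq_scale c x = (\<lambda>n. c * x n)"

definition is_solution :: "nat \<Rightarrow> (nat \<Rightarrow> int \<Rightarrow> complex) \<Rightarrow> (int \<Rightarrow> complex) \<Rightarrow> bool" where
  "is_solution r a x \<longleftrightarrow> (\<forall>n::int. (\<Sum>k\<le>r. a k n * x (n + int k)) = 0)"

definition supp_seq :: "(int \<Rightarrow> complex) \<Rightarrow> int set" where
  "supp_seq x = {i. x i \<noteq> 0}"

definition infinite_dimensional :: "(int \<Rightarrow> complex) set \<Rightarrow> bool" where
  "infinite_dimensional W \<longleftrightarrow> \<not> (\<exists>B. finite B \<and> W \<subseteq> module.span seq_scale B)"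

end

theory Submission
  imports Defs
begin

interpretation V: vector_space seq_scale
  by unfold_locales (auto simp: seq_scale_def fun_eq_iff algebra_simps)

lemma sum_fun_apply: "finite A \<Longrightarrow> (sum f A) n = (\<Sum>a\<in>A. (f a) n)"
  for f :: "'b \<Rightarrow> int \<Rightarrow> complex"
  by (induction A rule: finite_induct) auto

lemma coeff_exists:
  fixes f :: "'b \<Rightarrow> int \<Rightarrow> complex"
  assumes "finite P" "finite B" "card P < card B"
  shows "\<exists>u. (\<exists>b\<in>B. u b \<noteq> 0) \<and> (\<forall>p\<in>P. (\<Sum>b\<in>B. u b * f b p) = 0)"
  using assms
proof (induction P arbitrary: B f rule: finite_induct)
  case empty
  then have "B \<noteq> {}" by auto
  then show ?case by (rule_tac x="\<lambda>_. 1" in exI) auto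
next
  case (insert p P0)
  show ?case
  proof (cases "\<forall>b\<in>B. f b p = 0")
    case True
    from insert have "card P0 < card B" by simp
    from insert.IH[OF insert.prems(1) this, of f] obtain u where
      u: "\<exists>b\<in>B. u b \<noteq> 0" "\<forall>p\<in>P0. (\<Sum>b\<in>B. u b * f b p) = 0" by blast
    show ?thesis using u True by (rule_tac x=u in exI) auto
  next
    case False
    then obtain b0 where b0: "b0 \<in> B" "f b0 p \<noteq> 0" by blast
    define B0 where "B0 = B - {b0}"
    define g where "g = (\<lambda>b q. f b q - (f b p / f b0 p) * f b0 q)"
    have fB0: "finite B0" using insert B0_def by simp
    have cB0: "card P0 < card B0" using insert b0 B0_def by simp
    from insert.IH[OF fB0 cB0, of g] obtain u0 where
      u0: "\<exists>b\<in>B0. u0 b \<noteq> 0" "\<forall>q\<in>P0. (\<Sum>b\<in>B0. u0 b * g b q) = 0" by blast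
    define u where "u = (\<lambda>b. if b = b0 then - (\<Sum>b\<in>B0. u0 b * (f b p / f b0 p)) else u0 b)"
    have key: "(\<Sum>b\<in>B. u b * f b q) = (\<Sum>b\<in>B0. u0 b * g b q)" for q
    proof -
      have "(\<Sum>b\<in>B. u b * f b q) = u b0 * f b0 q + (\<Sum>b\<in>B0. u b * f b q)"
        using b0 insert.prems(1) B0_def by (simp add: sum.remove)
      also have "(\<Sum>b\<in>B0. u b * f b q) = (\<Sum>b\<in>B0. u0 b * f b q)"
        by (rule sum.cong) (auto simp: u_def B0_def)
      also have "u b0 * f b0 q = - (\<Sum>b\<in>B0. u0 b * (f b p / f b0 p) * f b0 q)"
        by (simp add: u_def sum_distrib_right)
      finally show ?thesis
        by (simp add: g_def algebra_simps sum_subtractf sum_negf)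
    qed
    show ?thesis
    proof (rule exI[of _ u], intro conjI ballI)
      show "\<exists>b\<in>B. u b \<noteq> 0" using u0(1) by (auto simp: u_def B0_def)
    next
      fix q assume "q \<in> insert p P0"
      then show "(\<Sum>b\<in>B. u b * f b q) = 0"
        using u0(2) b0 by (auto simp: key g_def)
    qed
  qed
qed

definition Wp :: "(int \<Rightarrow> complex) set" where "Wp = {x. \<forall>n<0. x n = 0}"

lemma subspace_Wp: "V.subspace Wp"
  by (auto simp: V.subspace_def Wp_def seq_scale_def)

lemma window:
  assumes "finite B" "B \<subseteq> Wp"
  shows "\<exists>J::int. \<forall>x\<in>V.span B. (\<forall>n\<in>{0..J}. x n = 0) \<longrightarrow> x = 0"
  using assms
proof (induction B rule: finite_induct)
  case empty
  then show ?case by auto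
next
  case (insert b B0)
  from insert.IH insert.prems obtain J0 where J0: "\<forall>x\<in>V.span B0. (\<forall>n\<in>{0..J0}. x n = 0) \<longrightarrow> x = 0" by blast
  have spW: "V.span (insert b B0) \<subseteq> Wp"
    using insert.prems subspace_Wp V.span_minimal by blast
  show ?case
  proof (cases "\<exists>x\<in>V.span (insert b B0). x \<noteq> 0 \<and> (\<forall>n\<in>{0..J0}. x n = 0)")
    case False
    then show ?thesis by blast
  next
    case True
    then obtain xs where xs: "xs \<in> V.span (insert b B0)" "xs \<noteq> 0" "\<forall>n\<in>{0..J0}. xs n = 0"
      by blast
    then obtain m where m: "xs m \<noteq> 0" by (auto simp: fun_eq_iff)
    have "m \<ge> 0" using xs(1) spW m by (force simp: Wp_def)
    from xs(1) obtain ks where ks: "xs - seq_scale ks b \<in> V.span B0"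
      by (auto simp: V.span_insert)
    have ks0: "ks \<noteq> 0"
    proof
      assume "ks = 0"
      moreover have "seq_scale 0 b = 0" by (simp add: seq_scale_def fun_eq_iff)
      ultimately have "xs \<in> V.span B0" using ks by simp
      with J0 xs show False by blast
    qed
    show ?thesis
    proof (rule exI[of _ "max J0 m"], intro ballI impI)
      fix x assume x: "x \<in> V.span (insert b B0)" "\<forall>n\<in>{0..max J0 m}. x n = 0"
      from x(1) obtain k where k: "x - seq_scale k b \<in> V.span B0"
        by (auto simp: V.span_insert)
      define c where "c = k / ks"
      have "(x - seq_scale k b) - seq_scale c (xs - seq_scale ks b) \<in> V.span B0"
        using k ks V.span_diff V.span_scale by blast
      moreover have "(x - seq_scale k b) - seq_scale c (xs - seq_scale ks b) = x - seq_scale c xs"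
        using ks0 by (auto simp: fun_eq_iff seq_scale_def c_def field_simps)
      ultimately have z: "x - seq_scale c xs \<in> V.span B0" by simp
      have "\<forall>n\<in>{0..J0}. (x - seq_scale c xs) n = 0"
        using x(2) xs(3) by (auto simp: seq_scale_def)
      with J0 z have e: "x = seq_scale c xs" by auto
      have "x m = 0" using x(2) \<open>m \<ge> 0\<close> by auto
      with e m have "c = 0" by (simp add: seq_scale_def)
      with e show "x = 0" by (simp add: seq_scale_def fun_eq_iff)
    qed
  qed
qed

theorem lemma2:
  fixes r :: nat and a :: "nat \<Rightarrow> int \<Rightarrow> complex"
  assumes "infinite_dimensional {x. is_solution r a x \<and> supp_seq x \<subseteq> {0..}}"
  shows "\<exists>J::int. J > 0 \<and> (\<exists>x. is_solution r a x \<and> x \<noteq> (\<lambda>_. 0) \<and> supp_seq x \<subseteq> {1..J})"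
proof -
  define W where "W = {x. is_solution r a x \<and> supp_seq x \<subseteq> {0..}}"
  have subW: "V.subspace W"
  proof (rule V.subspaceI)
    show "0 \<in> W" by (simp add: W_def is_solution_def supp_seq_def)
  next
    fix x y assume "x \<in> W" "y \<in> W"
    then have "x + y \<in> Collect (is_solution r a)"
      by (auto simp: W_def is_solution_def distrib_left sum.distrib)
    moreover have "supp_seq (x + y) \<subseteq> {0..}"
    proof
      fix i assume "i \<in> supp_seq (x + y)"
      then have "x i \<noteq> 0 \<or> y i \<noteq> 0" by (auto simp: supp_seq_def)
      then show "i \<in> {0..}" using \<open>x \<in> W\<close> \<open>y \<in> W\<close> by (auto simp: W_def supp_seq_def)
    qed
    ultimately show "x + y \<in> W" by (simp add: W_def)
  next
    fix c x assume "x \<in> W"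
    then show "seq_scale c x \<in> W"
      by (auto simp: W_def is_solution_def supp_seq_def seq_scale_def
          mult.left_commute[of _ c] sum_distrib_left[symmetric])
  qed
  have WWp: "W \<subseteq> Wp" by (force simp: W_def Wp_def supp_seq_def)
  have inf: "\<not> W \<subseteq> V.span B" if "finite B" for B
    using assms that by (auto simp: infinite_dimensional_def W_def)
  have "\<exists>B. finite B \<and> B \<subseteq> W \<and> V.independent B \<and> card B = n" for n
  proof (induction n)
    case 0
    then show ?case by (rule_tac x="{}" in exI) (auto simp: V.dependent_def)
  next
    case (Suc n)
    then obtain B where B: "finite B" "B \<subseteq> W" "V.independent B" "card B = n" by blast
    from inf[OF B(1)] obtain w where w: "w \<in> W" "w \<notin> V.span B" by blast
    then have "w \<notin> B" using V.span_base by blast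
    then show ?case using B w
      by (rule_tac x="insert w B" in exI) (auto simp: V.independent_insert)
  qed
  then obtain B where B: "finite B" "B \<subseteq> W" "V.independent B" "card B = r + 2" by blast
  have spB: "V.span B \<subseteq> W" using B(2) subW V.span_minimal by blast
  obtain J where J: "\<forall>x\<in>V.span B. (\<forall>n\<in>{0..J}. x n = 0) \<longrightarrow> x = 0"
    using window[OF B(1)] B(2) WWp by blast
  define P where "P = insert 0 {J+1..J+int r}"
  have "card P \<le> Suc (card {J+1..J+int r})" unfolding P_def by (rule card_insert_le_m1) auto
  then have cP: "card P < card B" using B(4) by simp
  have fP: "finite P" by (simp add: P_def)
  obtain u where u: "\<exists>b\<in>B. u b \<noteq> 0" "\<forall>p\<in>P. (\<Sum>b\<in>B. u b * b p) = 0"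
    using coeff_exists[OF fP B(1) cP, of "\<lambda>b. b"] by blast
  define x where "x = (\<Sum>b\<in>B. seq_scale (u b) b)"
  have xn: "x n = (\<Sum>b\<in>B. u b * b n)" for n
    unfolding x_def using B(1) by (simp add: sum_fun_apply seq_scale_def)
  have "x \<noteq> 0"
  proof
    assume "x = 0"
    then have "V.dependent B" using u(1) B(1) unfolding x_def V.dependent_finite[OF B(1)] by blast
    with B(3) show False by blast
  qed
  have xsp: "x \<in> V.span B" unfolding x_def
    by (intro V.span_sum V.span_scale V.span_base)
  then have xW: "x \<in> W" using spB by blast
  have xP: "x p = 0" if "p \<in> P" for p using u(2) that xn by simp
  from J xsp \<open>x \<noteq> 0\<close> obtain n0 where n0: "n0 \<in> {0..J}" "x n0 \<noteq> 0" by blast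
  have "n0 \<noteq> 0" using xP n0 by (auto simp: P_def)
  with n0 have n0': "1 \<le> n0" "n0 \<le> J" by auto
  define y where "y = (\<lambda>n. if 1 \<le> n \<and> n \<le> J then x n else 0)"
  have xneg: "x n = 0" if "n \<le> 0" for n
  proof (cases "n = 0")
    case True then show ?thesis using xP by (simp add: P_def)
  next
    case False then show ?thesis using xW that by (force simp: W_def supp_seq_def)
  qed
  have xsol: "is_solution r a x" using xW by (simp add: W_def)
  have ysol: "is_solution r a y"
    unfolding is_solution_def
  proof
    fix n :: int
    show "(\<Sum>k\<le>r. a k n * y (n + int k)) = 0"
    proof (cases "n \<le> J")
      case True
      have "(\<Sum>k\<le>r. a k n * y (n + int k)) = (\<Sum>k\<le>r. a k n * x (n + int k))"
      proof (rule sum.cong)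
        fix k assume "k \<in> {..r}"
        then have "k \<le> r" by simp
        have "y (n + int k) = x (n + int k)"
        proof (cases "n + int k \<le> 0")
          case True then show ?thesis using xneg by (simp add: y_def)
        next
          case False
          show ?thesis
          proof (cases "n + int k \<le> J")
            case True then show ?thesis using False by (simp add: y_def)
          next
            case False2: False
            then have "n + int k \<in> P" using \<open>n \<le> J\<close> \<open>k \<le> r\<close> by (auto simp: P_def)
            then show ?thesis using xP False2 by (simp add: y_def)
          qed
        qed
        then show "a k n * y (n + int k) = a k n * x (n + int k)" by simp
      qed simp
      also have "\<dots> = 0" using xsol by (simp add: is_solution_def)
      finally show ?thesis .
    next
      case False
      then show ?thesis by (simp add: y_def)
    qed
  qed
  have "y \<noteq> (\<lambda>_. 0)"
  proof
    assume "y = (\<lambda>_. 0)"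
    then have "y n0 = 0" by simp
    with n0 n0' show False by (simp add: y_def)
  qed
  moreover have "supp_seq y \<subseteq> {1..J}" by (auto simp: supp_seq_def y_def split: if_splits)
  moreover have "J > 0" using n0' by simp
  ultimately show ?thesis using ysol by blast
qed

end
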